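(* Let $0<d<2$, $h\in\{1,2\}$, and let $M=M(n)$ satisfy $1\le M\le m$. Then, with probability tending to $1$ as $n\to\infty$, the pruned formula $\hat\Phi_h(M,m-M)$ is obtained from $\hat\Phi_h(M-1,m-M)$ by adding the clause $\vec a_M$.
   Context: A 2-CNF is a conjunction of clauses, each the disjunction of two literals on two distinct variables. Let $m=m_n\sim dn/2$. Let $(\vec a_i),(\vec a'_i),(\vec a''_i)$ be mutually independent sequences of independent clauses, each uniform among the $4\binom n2$ clauses on two distinct variables of $x_1,\dots,x_n$. Set $$\Phi_1(M,M')=\vec a_1\wedge\cdots\wedge\vec a_M\wedge\vec a'_1\wedge\cdots\wedge\vec a'_{M'},\qquad\Phi_2(M,M')=\vec a_1\wedge\cdots\wedge\vec a_M\wedge\vec a''_1\wedge\cdots\wedge\vec a''_{M'}.$$ $\hat\Phi_h(M,M')$ is the pruned formula of $\Phi_h(M,M')$. Pruning is defined as follows. For a 2-CNF $\Psi$ and literals $\mathcal L_0$, let $\mathcal L(\Psi,\mathcal L_0)$ be the closure of $\mathcal L_0$ under: if $\Psi$ has a clause $l\vee\neg l'$ with $l'\in\mathcal L$, add $l$. Conflict clauses $\mathcal C(\Psi,\mathcal L_0)$ are the clauses both of whose variables $x$ satisfy $x,\neg x\in\mathcal L(\Psi,\mathcal L_0)$. $\hat\Psi$ is $\Psi$ with $\bigcup_l\mathcal C(\Psi,\{l\})$ removed, $l$ ranging over all literals. *)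

theory Defs
  imports "HOL-Probability.Probability" "HOL-Library.Landau_Symbols" "HOL-Library.Multiset"
begin

(* A literal is (variable index, sign); (v, True) is x_v and (v, False) is its negation. *)
type_synonym lit = "nat \<times> bool"
type_synonym clause = "lit set"
type_synonym cnf = "clause multiset"

definition neg :: "lit \<Rightarrow> lit" where
  "neg l = (fst l, \<not> snd l)"

definition clauses :: "nat \<Rightarrow> clause set" where
  "clauses n = {C. \<exists>l1 l2. C = {l1, l2} \<and> fst l1 \<noteq> fst l2 \<and>
                  fst l1 \<in> {1..n} \<and> fst l2 \<in> {1..n}}"

definition clause_pmf :: "nat \<Rightarrow> clause pmf" where
  "clause_pmf n = pmf_of_set (clauses n)"

(* sample space: for each index i in 1..K, the triple (a_i, a'_i, a''_i) of independent
   uniform clauses; all triples independent *)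
definition sample :: "nat \<Rightarrow> nat \<Rightarrow> (nat \<Rightarrow> clause \<times> clause \<times> clause) pmf" where
  "sample n K = Pi_pmf {1..K} ({}, {}, {})
      (\<lambda>_. pair_pmf (clause_pmf n) (pair_pmf (clause_pmf n) (clause_pmf n)))"

definition Phi :: "nat \<Rightarrow> (nat \<Rightarrow> clause \<times> clause \<times> clause) \<Rightarrow> nat \<Rightarrow> nat \<Rightarrow> cnf" where
  "Phi h \<omega> M M' = mset (map (\<lambda>i. fst (\<omega> i)) [1..<Suc M]) +
      mset (map (\<lambda>i. if h = 1 then fst (snd (\<omega> i)) else snd (snd (\<omega> i))) [1..<Suc M'])"

inductive_set lclosure :: "cnf \<Rightarrow> lit set \<Rightarrow> lit set" for \<Psi> L0 where
  base: "l \<in> L0 \<Longrightarrow> l \<in> lclosure \<Psi> L0"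
| step: "{l, neg l'} \<in># \<Psi> \<Longrightarrow> l' \<in> lclosure \<Psi> L0 \<Longrightarrow> l \<in> lclosure \<Psi> L0"

definition conflicts :: "cnf \<Rightarrow> lit set \<Rightarrow> clause set" where
  "conflicts \<Psi> L0 = {C. C \<in># \<Psi> \<and>
      (\<forall>l\<in>C. (fst l, True) \<in> lclosure \<Psi> L0 \<and> (fst l, False) \<in> lclosure \<Psi> L0)}"

definition prune :: "cnf \<Rightarrow> cnf" where
  "prune \<Psi> = filter_mset (\<lambda>C. C \<notin> (\<Union>l. conflicts \<Psi> {l})) \<Psi>"

end

theory Submission
  imports Defs "HOL-Real_Asymp.Real_Asymp"
begin


lemma neg_neg[simp]: "neg (neg x) = x" by (simp add: neg_def)
lemma neg_ne[simp]: "neg x \<noteq> x" by (cases x) (simp add: neg_def)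
lemma neg_ne'[simp]: "x \<noteq> neg x" by (cases x) (simp add: neg_def)
lemma neg_inj[simp]: "neg x = neg y \<longleftrightarrow> x = y" by (metis neg_neg)
lemma fst_neg[simp]: "fst (neg x) = fst x" by (simp add: neg_def)

lemma lclosure_mono:
  assumes "set_mset \<Psi> \<subseteq> set_mset \<Psi>'" "y \<in> lclosure \<Psi> L0"
  shows "y \<in> lclosure \<Psi>' L0"
  using assms(2)
proof induct
  case (base l) then show ?case by (rule lclosure.base)
next
  case (step l l') then show ?case using assms(1) by (blast intro: lclosure.step)
qed

lemma lclosure_trans:
  assumes "z \<in> lclosure \<Psi> {y}" "y \<in> lclosure \<Psi> {x}"
  shows "z \<in> lclosure \<Psi> {x}"
  using assms(1)
proof induct
  case (base l) then show ?case using assms(2) by simp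
next
  case (step l l') then show ?case by (blast intro: lclosure.step)
qed

lemma lclosure_twin:
  assumes "y \<in> lclosure \<Psi> {x}"
  shows "neg x \<in> lclosure \<Psi> {neg y}"
  using assms
proof induct
  case (base l) then show ?case by (simp add: lclosure.base)
next
  case (step l l')
  have "{neg l', neg (neg l)} \<in># \<Psi>" using step(1) by (simp add: insert_commute)
  then have "neg l' \<in> lclosure \<Psi> {neg l}"
    by (blast intro: lclosure.step lclosure.base)
  then show ?case using step(3) lclosure_trans by blast
qed

lemma contra_self:
  assumes "x \<in> lclosure \<Psi> {l}" "neg x \<in> lclosure \<Psi> {l}"
  shows "neg l \<in> lclosure \<Psi> {l}"
  using lclosure_twin[OF assms(1)] assms(2) lclosure_trans by blast

lemma prune_add:
  assumes noG: "\<not>(\<exists>l w z. neg l \<in> lclosure (\<Psi> + {#a#}) {l} \<and> w \<in> lclosure (\<Psi> + {#a#}) {l} \<and> a = {z, neg w})"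
    and a2: "\<exists>l1 l2. a = {l1, l2}"
  shows "prune (\<Psi> + {#a#}) = prune \<Psi> + {#a#}"
proof -
  let ?P' = "\<Psi> + {#a#}"
  have sub: "set_mset \<Psi> \<subseteq> set_mset ?P'" by auto
  have eqL: "lclosure ?P' {l} = lclosure \<Psi> {l}" if c: "neg l \<in> lclosure ?P' {l}" for l
  proof
    show "lclosure ?P' {l} \<subseteq> lclosure \<Psi> {l}"
    proof
      fix y assume "y \<in> lclosure ?P' {l}"
      then show "y \<in> lclosure \<Psi> {l}"
      proof induct
        case (base l) then show ?case by (rule lclosure.base)
      next
        case (step y l')
        show ?case
        proof (cases "{y, neg l'} = a")
          case True
          then show ?thesis using noG c step(2) by blast
        next
          case False
          then have "{y, neg l'} \<in># \<Psi>" using step(1) by auto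
          then show ?thesis using step(3) by (rule lclosure.step)
        qed
      qed
    qed
  next
    show "lclosure \<Psi> {l} \<subseteq> lclosure ?P' {l}" using lclosure_mono[OF sub] by blast
  qed
  have confeq: "C \<in> conflicts ?P' {l} \<longleftrightarrow> C \<in> conflicts \<Psi> {l}" if "C \<in># \<Psi>" for C l
  proof (cases "C = {}")
    case True then show ?thesis using that by (simp add: conflicts_def)
  next
    case False
    show ?thesis
    proof
      assume "C \<in> conflicts ?P' {l}"
      then have h: "\<forall>y\<in>C. (fst y, True) \<in> lclosure ?P' {l} \<and> (fst y, False) \<in> lclosure ?P' {l}"
        by (simp add: conflicts_def)
      obtain y where "y \<in> C" using False by blast
      then have "(fst y, True) \<in> lclosure ?P' {l}" "neg (fst y, True) \<in> lclosure ?P' {l}"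
        using h by (auto simp: neg_def)
      then have "neg l \<in> lclosure ?P' {l}" by (rule contra_self)
      then show "C \<in> conflicts \<Psi> {l}" using eqL h that by (simp add: conflicts_def)
    next
      assume "C \<in> conflicts \<Psi> {l}"
      then show "C \<in> conflicts ?P' {l}" using lclosure_mono[OF sub]
        by (auto simp: conflicts_def)
    qed
  qed
  have anot: "a \<notin> conflicts ?P' {l}" for l
  proof
    assume "a \<in> conflicts ?P' {l}"
    then have h: "\<forall>y\<in>a. (fst y, True) \<in> lclosure ?P' {l} \<and> (fst y, False) \<in> lclosure ?P' {l}"
      by (simp add: conflicts_def)
    obtain l1 l2 where a: "a = {l1, l2}" using a2 by blast
    have "l1 \<in> lclosure ?P' {l}" "neg l1 \<in> lclosure ?P' {l}"
      using h a by (cases l1; cases "snd l1"; auto simp: neg_def)+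
    then have "neg l \<in> lclosure ?P' {l}" by (rule contra_self)
    moreover have "a = {l2, neg (neg l1)}" using a by auto
    ultimately show False using noG \<open>neg l1 \<in> lclosure ?P' {l}\<close> by blast
  qed
  have "prune ?P' = filter_mset (\<lambda>C. C \<notin> (\<Union>l. conflicts ?P' {l})) \<Psi> + {#a#}"
    unfolding prune_def using anot by simp
  also have "filter_mset (\<lambda>C. C \<notin> (\<Union>l. conflicts ?P' {l})) \<Psi> = prune \<Psi>"
    unfolding prune_def using confeq by (intro filter_mset_cong) auto
  finally show ?thesis .
qed



definition wk :: "(nat \<Rightarrow> clause) \<Rightarrow> nat \<Rightarrow> lit list \<Rightarrow> nat list \<Rightarrow> bool" where
  "wk c m xs ps \<longleftrightarrow> length xs = Suc (length ps) \<and>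
     (\<forall>q<length ps. ps!q < m \<and> c (ps!q) = {xs!Suc q, neg (xs!q)})"

definition SW :: "lit list \<Rightarrow> lit set" where
  "SW xs = set xs \<union> neg ` set xs"

definition lolli :: "(nat \<Rightarrow> clause) \<Rightarrow> nat \<Rightarrow> lit list \<Rightarrow> nat list \<Rightarrow> bool" where
  "lolli c m xs ps \<longleftrightarrow> wk c m xs ps \<and> distinct ps \<and> ps \<noteq> [] \<and>
     (\<exists>j<length ps. xs!length ps = neg (xs!j))"

lemma wk_take:
  assumes "wk c m xs ps" "b \<le> length ps"
  shows "wk c m (take (Suc b) xs) (take b ps)"
  using assms by (auto simp: wk_def)

lemma wk_drop:
  assumes "wk c m xs ps" "b \<le> length ps"
  shows "wk c m (drop b xs) (drop b ps)"
  using assms by (auto simp: wk_def add.commute[of b] simp flip: add_Suc)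

lemma wk_cut:
  assumes w: "wk c m xs ps" and ij: "i < j" "j \<le> length ps" and eq: "xs!i = xs!j"
  shows "wk c m (take i xs @ drop j xs) (take i ps @ drop j ps)"
  unfolding wk_def
proof (rule conjI)
  show "length (take i xs @ drop j xs) = Suc (length (take i ps @ drop j ps))"
    using w ij by (auto simp: wk_def)
next
  show "\<forall>q<length (take i ps @ drop j ps). (take i ps @ drop j ps) ! q < m \<and>
        c ((take i ps @ drop j ps) ! q) =
        {(take i xs @ drop j xs) ! Suc q, neg ((take i xs @ drop j xs) ! q)}"
  proof (intro allI impI)
  fix q assume q: "q < length (take i ps @ drop j ps)"
  have lx: "length xs = Suc (length ps)" using w by (simp add: wk_def)
  have W: "\<And>q. q < length ps \<Longrightarrow> ps!q < m \<and> c (ps!q) = {xs!Suc q, neg (xs!q)}"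
    using w by (simp add: wk_def)
  show "(take i ps @ drop j ps) ! q < m \<and>
        c ((take i ps @ drop j ps) ! q) =
        {(take i xs @ drop j xs) ! Suc q, neg ((take i xs @ drop j xs) ! q)}"
  proof (cases "Suc q < i")
    case True
    then show ?thesis using W[of q] ij lx by (auto simp: nth_append)
  next
    case False
    show ?thesis
    proof (cases "q < i")
      case True
      then have "q = i - 1" "Suc q = i" using False by auto
      then show ?thesis using W[of q] ij lx eq True by (auto simp: nth_append)
    next
      case False
      have "j + (q - i) < length ps" using q ij False by auto
      moreover have "Suc (j + (q - i)) = j + (Suc q - i)" using False by auto
      ultimately show ?thesis using W[of "j + (q - i)"] ij lx False
        by (auto simp: nth_append min_def)
    qed
  qed
  qed
qed

lemma wk_snoc:
  assumes "wk c m xs ps" "p < m" "c p = {y, neg (last xs)}"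
  shows "wk c m (xs @ [y]) (ps @ [p])"
proof -
  have lx: "length xs = Suc (length ps)" using assms by (simp add: wk_def)
  then have "last xs = xs ! length ps" by (metis last_conv_nth list.size(3) nat.distinct(1) diff_Suc_1)
  then show ?thesis using assms lx
    by (auto simp: wk_def nth_append less_Suc_eq)
qed

lemma closure_wk:
  assumes "y \<in> lclosure (mset (map c [0..<m])) {x}"
  shows "\<exists>xs ps. wk c m xs ps \<and> xs!0 = x \<and> last xs = y"
  using assms
proof induct
  case (base l)
  then show ?case by (intro exI[of _ "[x]"] exI[of _ "[]"]) (auto simp: wk_def)
next
  case (step l l')
  then obtain xs ps where w: "wk c m xs ps" "xs!0 = x" "last xs = l'" by blast
  from step(1) obtain p where p: "p < m" "c p = {l, neg l'}" by auto
  have "length xs = Suc (length ps)" using w by (simp add: wk_def)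
  then show ?case using wk_snoc[OF w(1) p(1)] p w
    by (intro exI[of _ "xs @ [l]"] exI[of _ "ps @ [p]"]) (auto simp: nth_append)
qed



lemma wk_len: "wk c m xs ps \<Longrightarrow> length xs = Suc (length ps)"
  by (simp add: wk_def)

lemma wk_step: "wk c m xs ps \<Longrightarrow> q < length ps \<Longrightarrow> ps!q < m \<and> c (ps!q) = {xs!Suc q, neg (xs!q)}"
  by (simp add: wk_def)

lemma not_distinct_nth:
  assumes "\<not> distinct xs"
  shows "\<exists>i j. i < j \<and> j < length xs \<and> xs!i = xs!j"
proof -
  from assms obtain i j where h: "i < length xs" "j < length xs" "i \<noteq> j" "xs!i = xs!j"
    by (auto simp: distinct_conv_nth)
  show ?thesis
  proof (cases "i < j")
    case True then show ?thesis using h by blast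
  next
    case False then have "j < i" using h by auto
    then show ?thesis using h by metis
  qed
qed

lemma first_reuse:
  assumes w: "wk c m xs ps" and dx: "distinct xs" and nd: "\<not> distinct ps"
  shows "\<exists>a b. Suc a < b \<and> b < length ps \<and> distinct (take b ps) \<and>
           xs!b = neg (xs!Suc a) \<and> xs!Suc b = neg (xs!a)"
proof -
  let ?P = "\<lambda>b. b < length ps \<and> ps!b \<in> set (take b ps)"
  from nd obtain i j where ij: "i < length ps" "j < length ps" "i \<noteq> j" "ps!i = ps!j"
    by (auto simp: distinct_conv_nth)
  have "\<exists>b. ?P b"
  proof (cases "i < j")
    case True
    then have "ps!j \<in> set (take j ps)" using ij by (auto simp: in_set_conv_nth intro!: exI[of _ i])
    then show ?thesis using ij by blast
  next
    case False
    then have "j < i" using ij by auto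
    then have "ps!i \<in> set (take i ps)" using ij by (auto simp: in_set_conv_nth intro!: exI[of _ j])
    then show ?thesis using ij by blast
  qed
  define b where "b = (LEAST b. ?P b)"
  have Pb: "?P b" unfolding b_def using \<open>\<exists>b. ?P b\<close> by (rule LeastI_ex)
  have minb: "\<not> ?P b'" if "b' < b" for b' using not_less_Least[of b' ?P] that unfolding b_def by blast
  from Pb obtain a where a: "a < b" "ps!a = ps!b"
    by (auto simp: in_set_conv_nth)
  have db: "distinct (take b ps)"
  proof (rule ccontr)
    assume "\<not> distinct (take b ps)"
    then obtain i j where "i < j" "j < length (take b ps)"
      "take b ps ! i = take b ps ! j" using not_distinct_nth by blast
    then have "i < j" "j < b" "ps!i = ps!j" by auto
    then have "?P j" using Pb by (auto simp: in_set_conv_nth intro!: exI[of _ i])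
    then show False using minb \<open>j < b\<close> by blast
  qed
  have lx: "length xs = Suc (length ps)" using w by (rule wk_len)
  have ca: "c (ps!a) = {xs!Suc a, neg (xs!a)}" using wk_step[OF w, of a] a Pb by auto
  have cb: "c (ps!b) = {xs!Suc b, neg (xs!b)}" using wk_step[OF w, of b] Pb by auto
  have "{xs!Suc a, neg (xs!a)} = {xs!Suc b, neg (xs!b)}" using ca cb a by simp
  then have "(xs!Suc a = xs!Suc b \<and> neg (xs!a) = neg (xs!b)) \<or>
             (xs!Suc a = neg (xs!b) \<and> neg (xs!a) = xs!Suc b)"
    by (simp add: doubleton_eq_iff)
  moreover have "xs!Suc a \<noteq> xs!Suc b" using dx a Pb lx by (simp add: nth_eq_iff_index_eq)
  ultimately have e1: "xs!b = neg (xs!Suc a)" and e2: "xs!Suc b = neg (xs!a)" by auto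
  have "Suc a \<noteq> b" using e1 by auto
  then have "Suc a < b" using a by auto
  then show ?thesis using Pb db e1 e2 by blast
qed


lemma cut_props:
  assumes w: "wk c m xs ps" and ij: "i < j" "j < length xs" and eq: "xs!i = xs!j"
  shows "wk c m (take i xs @ drop j xs) (take i ps @ drop j ps)"
    "(take i xs @ drop j xs)!0 = xs!0" "last (take i xs @ drop j xs) = last xs"
    "length (take i ps @ drop j ps) < length ps"
proof -
  have lx: "length xs = Suc (length ps)" using w by (rule wk_len)
  show "wk c m (take i xs @ drop j xs) (take i ps @ drop j ps)"
    using wk_cut[OF w ij(1) _ eq] ij lx by auto
  show "(take i xs @ drop j xs)!0 = xs!0" using ij eq
    by (cases "i = 0") (auto simp: nth_append hd_drop_conv_nth)
  show "last (take i xs @ drop j xs) = last xs" using ij by auto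
  show "length (take i ps @ drop j ps) < length ps" using ij lx by auto
qed

lemma lolli_exists:
  assumes "wk c m xs ps" "last xs = neg (xs!0)"
  shows "\<exists>xs' ps'. lolli c m xs' ps' \<and> xs'!0 = xs!0"
  using assms
proof (induction "length ps" arbitrary: xs ps rule: less_induct)
  case less
  have lx: "length xs = Suc (length ps)" using less(2) by (rule wk_len)
  show ?case
  proof (cases "distinct xs")
    case False
    then obtain i j where ij: "i < j" "j < length xs" "xs!i = xs!j" using not_distinct_nth by blast
    note cp = cut_props[OF less(2) ij]
    show ?thesis using less(1)[OF cp(4) cp(1)] cp less(3) by simp
  next
    case dx: True
    show ?thesis
    proof (cases "distinct ps")
      case True
      have "ps \<noteq> []" using less(3) lx by (cases xs) auto
      moreover have "xs ! length ps = neg (xs!0)" using less(3) lx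
        by (metis last_conv_nth list.size(3) nat.distinct(1) diff_Suc_1)
      ultimately have "lolli c m xs ps" using less(2) True by (auto simp: lolli_def)
      then show ?thesis by blast
    next
      case False
      from first_reuse[OF less(2) dx False] obtain a b where ab: "Suc a < b" "b < length ps"
        "distinct (take b ps)" "xs!b = neg (xs!Suc a)" by blast
      have "lolli c m (take (Suc b) xs) (take b ps)"
        unfolding lolli_def using wk_take[OF less(2), of b] ab lx
        by (auto intro!: exI[of _ "Suc a"])
      then show ?thesis using ab by (intro exI[of _ "take (Suc b) xs"] exI[of _ "take b ps"]) auto
    qed
  qed
qed

lemma witness_exists:
  assumes "lolli c m xs ps" "wk c m ys qs" "ys!0 \<in> SW xs" "last ys = w"
  shows "\<exists>xs' ps' ys' qs'. lolli c m xs' ps' \<and> wk c m ys' qs' \<and> ys'!0 \<in> SW xs' \<and>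
            last ys' = w \<and> distinct (ps' @ qs')"
  using assms
proof (induction "length qs" arbitrary: xs ps ys qs rule: less_induct)
  case less
  have ly: "length ys = Suc (length qs)" using less(3) by (rule wk_len)
  have lx: "length xs = Suc (length ps)" using less(2) by (simp add: lolli_def wk_def)
  show ?case
  proof (cases "distinct ys")
    case False
    then obtain i j where ij: "i < j" "j < length ys" "ys!i = ys!j" using not_distinct_nth by blast
    note cp = cut_props[OF less(3) ij]
    show ?thesis using less(1)[OF cp(4) less(2) cp(1)] cp less(4,5) by simp
  next
    case dy: True
    show ?thesis
    proof (cases "\<exists>i. 0 < i \<and> i < length ys \<and> ys!i \<in> SW xs")
      case True
      then obtain i where i: "0 < i" "i < length ys" "ys!i \<in> SW xs" by blast
      have "wk c m (drop i ys) (drop i qs)" using wk_drop[OF less(3), of i] i ly by auto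
      moreover have "length (drop i qs) < length qs" using i ly by auto
      moreover have "drop i ys ! 0 = ys!i" using i by simp
      moreover have "last (drop i ys) = last ys" using i by simp
      ultimately show ?thesis using less(1)[OF _ less(2)] i less(5) by metis
    next
      case nS: False
      have disj: "set ps \<inter> set qs = {}"
      proof (rule ccontr)
        assume "set ps \<inter> set qs \<noteq> {}"
        then obtain i j where ij: "i < length qs" "j < length ps" "qs!i = ps!j"
          by (auto simp: in_set_conv_nth)
        have "c (ps!j) = {xs!Suc j, neg (xs!j)}" using less(2) ij by (simp add: lolli_def wk_def)
        moreover have "c (qs!i) = {ys!Suc i, neg (ys!i)}" using wk_step[OF less(3)] ij by blast
        ultimately have "ys!Suc i \<in> {xs!Suc j, neg (xs!j)}" using ij by auto
        moreover have "xs!Suc j \<in> set xs" "xs!j \<in> set xs" using ij lx by auto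
        ultimately have "ys!Suc i \<in> SW xs" by (auto simp: SW_def)
        then show False using nS ij ly by auto
      qed
      show ?thesis
      proof (cases "distinct qs")
        case True
        moreover have "distinct ps" using less(2) by (simp add: lolli_def)
        ultimately have "distinct (ps @ qs)" using disj by simp
        then show ?thesis using less(2-5) by blast
      next
        case False
        from first_reuse[OF less(3) dy False] obtain a b where ab: "Suc a < b" "b < length qs"
          "distinct (take b qs)" "ys!b = neg (ys!Suc a)" "ys!Suc b = neg (ys!a)" by blast
        have L: "lolli c m (take (Suc b) ys) (take b qs)"
          unfolding lolli_def using wk_take[OF less(3), of b] ab ly
          by (auto intro!: exI[of _ "Suc a"])
        have W: "wk c m (drop (Suc b) ys) (drop (Suc b) qs)" using wk_drop[OF less(3), of "Suc b"] ab by auto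
        have "ys!a \<in> set (take (Suc b) ys)" using ab ly
          by (auto simp: in_set_conv_nth intro!: exI[of _ a])
        then have S: "drop (Suc b) ys ! 0 \<in> SW (take (Suc b) ys)" using ab ly
          by (auto simp: SW_def)
        have la: "last (drop (Suc b) ys) = w" using ab ly less(5) by simp
        have "length (drop (Suc b) qs) < length qs" using ab by auto
        from less(1)[OF this L W S la] show ?thesis .
      qed
    qed
  qed
qed

lemma witness_final:
  assumes "lolli c m xs ps" "wk c m ys qs" "ys!0 \<in> SW xs" "p0 < m" "c p0 = {z, neg (last ys)}"
  shows "\<exists>xs' ps' ys' qs'. lolli c m xs' ps' \<and> wk c m ys' qs' \<and> ys'!0 \<in> SW xs' \<and>
            distinct (ps' @ qs') \<and> p0 \<in> set (ps' @ qs')"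
proof -
  obtain xs' ps' ys' qs' where h: "lolli c m xs' ps'" "wk c m ys' qs'" "ys'!0 \<in> SW xs'"
     "last ys' = last ys" "distinct (ps' @ qs')"
    using witness_exists[OF assms(1-3) refl] by blast
  show ?thesis
  proof (cases "p0 \<in> set (ps' @ qs')")
    case True then show ?thesis using h by blast
  next
    case False
    have "wk c m (ys' @ [z]) (qs' @ [p0])" using wk_snoc[OF h(2) assms(4)] assms(5) h(4) by simp
    moreover have "(ys' @ [z])!0 = ys'!0" using h(2) wk_len[OF h(2)] by (simp add: nth_append)
    ultimately show ?thesis using h False by (intro exI[of _ xs'] exI[of _ ps'] exI[of _ "ys' @ [z]"] exI[of _ "qs' @ [p0]"]) auto
  qed
qed



definition lits :: "nat \<Rightarrow> lit set" where "lits n = {1..n} \<times> (UNIV :: bool set)"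

definition wv :: "lit list \<Rightarrow> nat \<Rightarrow> lit list" where "wv ts j = ts @ [neg (ts!j)]"
definition av :: "lit list \<Rightarrow> nat \<Rightarrow> bool \<Rightarrow> lit list \<Rightarrow> lit list" where
  "av ts i b ss = (if b then ts!i else neg (ts!i)) # ss"
definition clist :: "lit list \<Rightarrow> clause list" where
  "clist vs = map (\<lambda>q. {vs!Suc q, neg (vs!q)}) [0..<length vs - 1]"
definition desc :: "lit list \<Rightarrow> nat \<Rightarrow> nat \<Rightarrow> bool \<Rightarrow> lit list \<Rightarrow> clause list" where
  "desc ts j i b ss = clist (wv ts j) @ clist (av ts i b ss)"
definition holds :: "(nat \<Rightarrow> clause) \<Rightarrow> nat list \<Rightarrow> clause list \<Rightarrow> bool" where
  "holds c pos Cs \<longleftrightarrow> (\<forall>q<length pos. c (pos!q) = Cs!q)"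

lemma length_clist[simp]: "length (clist vs) = length vs - 1" by (simp add: clist_def)
lemma length_desc[simp]: "length (desc ts j i b ss) = Suc (length ts) - 1 + length ss"
  by (simp add: desc_def wv_def av_def)

lemma clause_lits: "C \<in> clauses n \<Longrightarrow> y \<in> C \<Longrightarrow> y \<in> lits n"
  by (auto simp: clauses_def lits_def mem_Times_iff)

lemma clause_two: "C \<in> clauses n \<Longrightarrow> \<exists>l1 l2. C = {l1, l2}"
  by (auto simp: clauses_def)

lemma clist_nth: "q < length vs - 1 \<Longrightarrow> clist vs ! q = {vs!Suc q, neg (vs!q)}"
  by (simp add: clist_def)

lemma witness_desc:
  assumes L: "lolli c m xs ps" and W: "wk c m ys qs" and S: "ys!0 \<in> SW xs"
    and D: "distinct (ps @ qs)" and P: "p0 \<in> set (ps @ qs)"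
    and V: "\<forall>p<m. c p \<in> clauses n"
  shows "\<exists>ts j i b ss. length ts \<ge> 1 \<and> set ts \<subseteq> lits n \<and> j < length ts \<and> i < length ts \<and>
           set ss \<subseteq> lits n \<and> length ts + length ss = length (ps @ qs) \<and>
           holds c (ps @ qs) (desc ts j i b ss)"
proof -
  define k where "k = length ps"
  have wx: "wk c m xs ps" and dps: "ps \<noteq> []" and jx: "\<exists>j<length ps. xs!length ps = neg (xs!j)"
    using L by (auto simp: lolli_def)
  obtain j where j: "j < k" "xs!k = neg (xs!j)" using jx k_def by blast
  have lx: "length xs = Suc k" using wk_len[OF wx] k_def by simp
  have ly: "length ys = Suc (length qs)" using wk_len[OF W] .
  define ts where "ts = take k xs"
  have xs_eq: "wv ts j = xs"
  proof -
    have "ts ! j = xs ! j" using j by (simp add: ts_def)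
    then have "wv ts j = take k xs @ [xs!k]" using j by (simp add: wv_def ts_def)
    also have "\<dots> = xs" using lx by (metis lessI take_Suc_conv_app_nth take_all order_refl)
    finally show ?thesis .
  qed
  have "\<exists>i b. i < k \<and> ys!0 = (if b then xs!i else neg (xs!i))"
  proof -
    from S obtain i' where i': "i' \<le> k" "ys!0 = xs!i' \<or> ys!0 = neg (xs!i')"
      using lx by (auto simp: SW_def in_set_conv_nth less_Suc_eq_le)
    show ?thesis
    proof (cases "i' = k")
      case True
      then have "ys!0 = neg (xs!j) \<or> ys!0 = xs!j" using i' j by auto
      then show ?thesis using j by (metis (full_types))
    next
      case False
      then have "i' < k" using i' by auto
      then show ?thesis using i' by (metis (full_types))
    qed
  qed
  then obtain i b where ib: "i < k" "ys!0 = (if b then xs!i else neg (xs!i))" by blast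
  define ss where "ss = tl ys"
  have ys_eq: "av ts i b ss = ys"
  proof -
    have "ts!i = xs!i" using ib by (simp add: ts_def)
    then have "av ts i b ss = ys!0 # tl ys" using ib by (simp add: av_def ss_def)
    also have "\<dots> = ys" using ly by (cases ys) auto
    finally show ?thesis .
  qed
  have lts: "length ts = k" using lx by (simp add: ts_def)
  have tsl: "set ts \<subseteq> lits n"
  proof
    fix y assume "y \<in> set ts"
    then obtain q where q: "q < k" "y = xs!q" using lts by (auto simp: in_set_conv_nth ts_def)
    then have "ps!q < m" "c (ps!q) = {xs!Suc q, neg (xs!q)}" using wk_step[OF wx, of q] k_def by auto
    then have "neg y \<in> lits n" using V q clause_lits by (metis insertCI)
    then show "y \<in> lits n" by (simp add: lits_def mem_Times_iff)
  qed
  have ssl: "set ss \<subseteq> lits n"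
  proof
    fix y assume "y \<in> set ss"
    then obtain q where q: "q < length qs" "y = ys!Suc q" using ly
      by (auto simp: in_set_conv_nth ss_def nth_tl)
    then have "qs!q < m" "c (qs!q) = {ys!Suc q, neg (ys!q)}" using wk_step[OF W, of q] by auto
    then show "y \<in> lits n" using V q clause_lits by (metis insertCI)
  qed
  have lss: "length ss = length qs" using ly by (simp add: ss_def)
  have H: "holds c (ps @ qs) (desc ts j i b ss)"
    unfolding holds_def desc_def xs_eq ys_eq
  proof (intro allI impI)
    fix q assume q: "q < length (ps @ qs)"
    show "c ((ps @ qs) ! q) = (clist xs @ clist ys) ! q"
    proof (cases "q < k")
      case True
      then show ?thesis using wk_step[OF wx, of q] lx k_def by (simp add: nth_append clist_nth)
    next
      case False
      then have "q - k < length qs" using q k_def by auto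
      then show ?thesis using wk_step[OF W, of "q - k"] lx ly k_def False
        by (simp add: nth_append clist_nth)
    qed
  qed
  show ?thesis
    using H lts tsl ssl lss j ib dps k_def
    by (intro exI[of _ ts] exI[of _ j] exI[of _ i] exI[of _ b] exI[of _ ss]) auto
qed

lemma wk_set: "wk c m xs ps \<Longrightarrow> set ps \<subseteq> {..<m}"
  by (auto simp: wk_def in_set_conv_nth)

lemma fail_witness:
  fixes c :: "nat \<Rightarrow> clause"
  assumes M: "1 \<le> M" "M \<le> m" and V: "\<forall>p<m. c p \<in> clauses n"
    and P': "\<Psi>' = mset (map c [0..<m])" and P: "\<Psi>' = \<Psi> + {#c (M-1)#}"
    and F: "prune \<Psi>' \<noteq> prune \<Psi> + {#c (M-1)#}"
  shows "\<exists>pos ts j i b ss. distinct pos \<and> set pos \<subseteq> {..<m} \<and> (M-1) \<in> set pos \<and>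
     length ts \<ge> 1 \<and> set ts \<subseteq> lits n \<and> j < length ts \<and> i < length ts \<and> set ss \<subseteq> lits n \<and>
     length ts + length ss = length pos \<and> holds c pos (desc ts j i b ss)"
proof -
  have a2: "\<exists>l1 l2. c (M-1) = {l1, l2}" using V M clause_two by (metis diff_less less_le_trans zero_less_one)
  have "\<exists>l w z. neg l \<in> lclosure \<Psi>' {l} \<and> w \<in> lclosure \<Psi>' {l} \<and> c (M-1) = {z, neg w}"
    using prune_add[OF _ a2, of \<Psi>] F P by metis
  then obtain l w z where G: "neg l \<in> lclosure \<Psi>' {l}" "w \<in> lclosure \<Psi>' {l}" "c (M-1) = {z, neg w}"
    by blast
  obtain xs ps where w1: "wk c m xs ps" "xs!0 = l" "last xs = neg l"
    using closure_wk[of "neg l" c m l] G(1) P' by blast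
  obtain xs' ps' where L: "lolli c m xs' ps'" "xs'!0 = l"
    using lolli_exists[OF w1(1)] w1 by metis
  obtain ys qs where w2: "wk c m ys qs" "ys!0 = l" "last ys = w"
    using closure_wk[of w c m l] G(2) P' by blast
  have "l \<in> SW xs'" using L wk_len[of c m xs' ps'] unfolding lolli_def SW_def
    by (metis UnI1 nth_mem zero_less_Suc)
  then have S: "ys!0 \<in> SW xs'" using w2 by simp
  have p0: "M - 1 < m" using M by auto
  obtain xa pa ya qa where X: "lolli c m xa pa" "wk c m ya qa" "ya!0 \<in> SW xa"
    "distinct (pa @ qa)" "M-1 \<in> set (pa @ qa)"
    using witness_final[OF L(1) w2(1) S p0, of z] G(3) w2(3) by blast
  obtain ts j i b ss where T: "length ts \<ge> 1" "set ts \<subseteq> lits n" "j < length ts" "i < length ts"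
      "set ss \<subseteq> lits n" "length ts + length ss = length (pa @ qa)" "holds c (pa @ qa) (desc ts j i b ss)"
    using witness_desc[OF X V] by blast
  have "set (pa @ qa) \<subseteq> {..<m}" using wk_set[OF X(2)] wk_set[of c m xa pa] X(1)
    by (auto simp: lolli_def)
  then show ?thesis using X T by blast
qed



lemma card_lits: "card (lits n) = 2 * n"
  by (simp add: lits_def card_cartesian_product)

lemma finite_lits[simp]: "finite (lits n)" by (simp add: lits_def)

lemma clauses_sub: "clauses n \<subseteq> Pow (lits n)"
proof
  fix C assume "C \<in> clauses n"
  then obtain l1 l2 where "C = {l1,l2}" "fst l1 \<in> {1..n}" "fst l2 \<in> {1..n}"
    unfolding clauses_def by blast
  then show "C \<in> Pow (lits n)" by (auto simp: lits_def mem_Times_iff)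
qed

lemma finite_clauses: "finite (clauses n)"
  by (rule finite_subset[OF clauses_sub]) simp

lemma clauses_ne: "n \<ge> 2 \<Longrightarrow> clauses n \<noteq> {}"
proof -
  assume "n \<ge> 2"
  then have "{(1::nat,True),(2::nat,True)} \<in> clauses n" unfolding clauses_def
    by (intro CollectI exI[of _ "(1::nat,True)"] exI[of _ "(2::nat,True)"]) auto
  then show ?thesis by blast
qed

lemma card_clauses: "2 * n * (n - 1) \<le> card (clauses n)"
proof -
  define A where "A = lits n \<times> lits n"
  define Lt where "Lt = {x \<in> A. fst (fst x) < fst (snd x)}"
  define Gt where "Gt = {x \<in> A. fst (snd x) < fst (fst x)}"
  define Eq where "Eq = {x \<in> A. fst (fst x) = fst (snd x)}"
  have fA: "finite A" by (simp add: A_def)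
  have cA: "card A = (2*n) * (2*n)" by (simp add: A_def card_cartesian_product card_lits)
  have "A = Lt \<union> Gt \<union> Eq" by (auto simp: Lt_def Gt_def Eq_def)
  moreover have "Lt \<inter> Gt = {}" "(Lt \<union> Gt) \<inter> Eq = {}" by (auto simp: Lt_def Gt_def Eq_def)
  moreover have "finite Lt" "finite Gt" "finite Eq" using fA by (auto simp: Lt_def Gt_def Eq_def)
  ultimately have c1: "card A = card Lt + card Gt + card Eq"
    by (simp add: card_Un_disjoint)
  have "Gt = (\<lambda>x. (snd x, fst x)) ` Lt"
  proof (intro equalityI subsetI)
    fix x assume "x \<in> Gt" then show "x \<in> (\<lambda>x. (snd x, fst x)) ` Lt"
      by (intro image_eqI[of _ _ "(snd x, fst x)"]) (auto simp: Lt_def Gt_def A_def)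
  qed (auto simp: Lt_def Gt_def A_def)
  moreover have "inj_on (\<lambda>x. (snd x, fst x)) Lt" by (auto simp: inj_on_def prod_eq_iff)
  ultimately have c2: "card Gt = card Lt" by (simp add: card_image)
  have "Eq = (\<lambda>x. ((fst x, fst (snd x)), (fst x, snd (snd x)))) ` ({1..n} \<times> UNIV \<times> UNIV)"
  proof (intro equalityI subsetI)
    fix x assume "x \<in> Eq" then show "x \<in> (\<lambda>x. ((fst x, fst (snd x)), (fst x, snd (snd x)))) ` ({1..n} \<times> UNIV \<times> UNIV)"
      by (intro image_eqI[of _ _ "(fst (fst x), snd (fst x), snd (snd x))"])
         (auto simp: Eq_def A_def lits_def mem_Times_iff prod_eq_iff)
  qed (auto simp: Eq_def A_def lits_def mem_Times_iff)
  moreover have "inj_on (\<lambda>x. ((fst x, fst (snd x)), (fst x, snd (snd x)))) ({1..n} \<times> (UNIV::bool set) \<times> (UNIV::bool set))"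
    by (auto simp: inj_on_def prod_eq_iff)
  ultimately have c3: "card Eq = n * 4"
    by (simp add: card_image card_cartesian_product)
  have cA': "card A = 4 * (n * n)" using cA by (simp add: algebra_simps)
  have cL: "2 * card Lt + 4 * n = 4 * (n * n)" using c1 c2 c3 cA' by linarith
  have "inj_on (\<lambda>x. {fst x, snd x}) Lt"
  proof (rule inj_onI)
    fix a b assume ab: "a \<in> Lt" "b \<in> Lt" "{fst a, snd a} = {fst b, snd b}"
    then have "(fst a = fst b \<and> snd a = snd b) \<or> (fst a = snd b \<and> snd a = fst b)"
      by (simp add: doubleton_eq_iff)
    moreover have "fst (fst a) < fst (snd a)" "fst (fst b) < fst (snd b)" using ab(1,2) by (auto simp: Lt_def)
    ultimately show "a = b" by (metis less_asym prod.collapse)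
  qed
  moreover have "(\<lambda>x. {fst x, snd x}) ` Lt \<subseteq> clauses n"
  proof
    fix C assume "C \<in> (\<lambda>x. {fst x, snd x}) ` Lt"
    then obtain x where x: "x \<in> Lt" "C = {fst x, snd x}" by blast
    then have "fst (fst x) \<in> {1..n}" "fst (snd x) \<in> {1..n}" "fst (fst x) \<noteq> fst (snd x)"
      by (auto simp: Lt_def A_def lits_def mem_Times_iff)
    then show "C \<in> clauses n" unfolding clauses_def
      by (intro CollectI exI[of _ "fst x"] exI[of _ "snd x"]) (simp add: x(2))
  qed
  ultimately have "card Lt \<le> card (clauses n)"
    using card_image[of "\<lambda>x. {fst x, snd x}" Lt] card_mono[OF finite_clauses, of "(\<lambda>x. {fst x, snd x}) ` Lt"] by simp
  moreover have "2 * n * (n - 1) = card Lt"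
  proof -
    have "2 * (2 * n * (n - 1)) = 4 * (n * n) - 4 * n" by (cases n) (simp_all add: algebra_simps)
    then show ?thesis using cL by linarith
  qed
  ultimately show ?thesis by simp
qed

definition cpos :: "nat \<Rightarrow> nat \<Rightarrow> (nat \<Rightarrow> clause \<times> clause \<times> clause) \<Rightarrow> nat \<Rightarrow> clause" where
  "cpos h M \<omega> p = (if p < M then fst (\<omega> (Suc p))
     else if h = 1 then fst (snd (\<omega> (Suc (p - M)))) else snd (snd (\<omega> (Suc (p - M)))))"

lemma Phi_cpos:
  assumes "M \<le> m"
  shows "Phi h \<omega> M (m - M) = mset (map (cpos h M \<omega>) [0..<m])"
proof -
  have "map (\<lambda>i. fst (\<omega> i)) [1..<Suc M] @
        map (\<lambda>i. if h = 1 then fst (snd (\<omega> i)) else snd (snd (\<omega> i))) [1..<Suc (m - M)]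
        = map (cpos h M \<omega>) [0..<m]"
  proof -
    have e1: "map (\<lambda>i. fst (\<omega> i)) [1..<Suc M] = map (cpos h M \<omega>) [0..<M]"
    proof -
      have "[1..<Suc M] = map Suc [0..<M]" by (simp add: map_Suc_upt)
      then have "map (\<lambda>i. fst (\<omega> i)) [1..<Suc M] = map (\<lambda>p. fst (\<omega> (Suc p))) [0..<M]" by simp
      also have "\<dots> = map (cpos h M \<omega>) [0..<M]" by (rule map_cong) (auto simp: cpos_def)
      finally show ?thesis .
    qed
    have e2: "map (\<lambda>i. if h = 1 then fst (snd (\<omega> i)) else snd (snd (\<omega> i))) [1..<Suc (m - M)]
        = map (cpos h M \<omega>) [M..<m]"
    proof -
      have "[1..<Suc (m - M)] = map Suc [0..<m - M]" by (simp add: map_Suc_upt)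
      moreover have "[M..<m] = map (\<lambda>i. i + M) [0..<m - M]" using assms by (simp add: map_add_upt)
      ultimately show ?thesis by (simp add: cpos_def)
    qed
    have "[0..<m] = [0..<M] @ [M..<m]" using assms by (metis le0 upt_add_eq_append le_add_diff_inverse)
    then show ?thesis using e1 e2 by simp
  qed
  then show ?thesis unfolding Phi_def by (metis mset_append)
qed

lemma Phi_split:
  assumes "1 \<le> M"
  shows "Phi h \<omega> M M' = Phi h \<omega> (M - 1) M' + {#fst (\<omega> M)#}"
proof -
  have "[1..<Suc M] = [1..<Suc (M - 1)] @ [M]" using assms by simp
  then show ?thesis unfolding Phi_def by simp
qed

lemma cpos_last: "1 \<le> M \<Longrightarrow> cpos h M \<omega> (M - 1) = fst (\<omega> M)"
  by (simp add: cpos_def)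

lemma support_valid:
  assumes "n \<ge> 2" "M \<le> m" "\<omega> \<in> set_pmf (sample n m)"
  shows "\<forall>p<m. cpos h M \<omega> p \<in> clauses n"
proof (intro allI impI)
  fix p assume p: "p < m"
  have sc: "set_pmf (clause_pmf n) = clauses n"
    unfolding clause_pmf_def using finite_clauses clauses_ne assms(1) by simp
  have "\<omega> \<in> PiE_dflt {1..m} ({}, {}, {}) (set_pmf \<circ> (\<lambda>_. pair_pmf (clause_pmf n) (pair_pmf (clause_pmf n) (clause_pmf n))))"
    using assms(3) unfolding sample_def by (simp add: set_Pi_pmf)
  then have om: "\<And>i. i \<in> {1..m} \<Longrightarrow> \<omega> i \<in> clauses n \<times> clauses n \<times> clauses n"
    by (auto simp: PiE_dflt_def sc)
  show "cpos h M \<omega> p \<in> clauses n"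
  proof (cases "p < M")
    case True
    then show ?thesis using om[of "Suc p"] p assms by (auto simp: cpos_def mem_Times_iff)
  next
    case False
    then show ?thesis using om[of "Suc (p - M)"] p assms by (auto simp: cpos_def mem_Times_iff)
  qed
qed

lemma pair_prod_measure:
  "measure_pmf.prob (pair_pmf P Q) (A \<times> B) = measure_pmf.prob P A * measure_pmf.prob Q B"
proof -
  have "measure_pmf.prob (pair_pmf P Q) (A \<times> B) =
        measure_pmf.prob (pair_pmf P Q) ((A \<times> B) \<inter> set_pmf (pair_pmf P Q))"
    by (rule measure_Int_set_pmf[symmetric])
  also have "(A \<times> B) \<inter> set_pmf (pair_pmf P Q) = (A \<inter> set_pmf P) \<times> (B \<inter> set_pmf Q)" by auto
  also have "measure_pmf.prob (pair_pmf P Q) \<dots> = measure_pmf.prob P (A \<inter> set_pmf P) * measure_pmf.prob Q (B \<inter> set_pmf Q)"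
    by (rule measure_pmf_prob_product) (auto intro: countable_subset)
  also have "\<dots> = measure_pmf.prob P A * measure_pmf.prob Q B" by (simp add: measure_Int_set_pmf)
  finally show ?thesis .
qed

lemma prod_if_const:
  assumes "finite A"
  shows "(\<Prod>i\<in>A. if P i then (x::real) else 1) = x ^ card {i\<in>A. P i}"
proof -
  have "(\<Prod>i\<in>A. if P i then x else 1) = (\<Prod>i\<in>A \<inter> {i. P i}. x) * (\<Prod>i\<in>A \<inter> - {i. P i}. 1)"
    by (rule prod.If_cases[OF assms])
  also have "\<dots> = x ^ card (A \<inter> {i. P i})" by simp
  also have "A \<inter> {i. P i} = {i\<in>A. P i}" by blast
  finally show ?thesis .
qed

lemma clause_pmf_le:
  assumes "n \<ge> 2"
  shows "measure_pmf.prob (clause_pmf n) {C} \<le> 1 / real (card (clauses n))"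
proof -
  have "measure_pmf.prob (clause_pmf n) {C} = pmf (clause_pmf n) C" by (rule measure_pmf_single)
  also have "\<dots> = indicator (clauses n) C / real (card (clauses n))"
    unfolding clause_pmf_def using finite_clauses clauses_ne[OF assms] by simp
  also have "\<dots> \<le> 1 / real (card (clauses n))"
    by (intro divide_right_mono) (auto simp: indicator_def)
  finally show ?thesis .
qed

lemma clause_pmf_le':
  assumes "n \<ge> 2" "Y \<subseteq> {C}"
  shows "measure_pmf.prob (clause_pmf n) Y \<le> 1 / real (card (clauses n))"
  using measure_pmf.finite_measure_mono[of Y "{C}" "clause_pmf n"] assms clause_pmf_le[OF assms(1), of C]
  by simp

lemma card_split_M:
  fixes pos :: "nat list"
  assumes sp: "set pos \<subseteq> {..<m}" and Mm: "M \<le> m"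
  shows "card {i\<in>{1..m}. i - 1 \<in> set pos \<and> i - 1 < M} + card {i\<in>{1..m}. M + (i - 1) \<in> set pos}
         = card (set pos)"
proof -
  let ?D = "set pos"
  have s1: "{i\<in>{1..m}. i - 1 \<in> ?D \<and> i - 1 < M} = Suc ` (?D \<inter> {..<M})"
  proof (intro equalityI subsetI)
    fix i assume "i \<in> {i\<in>{1..m}. i - 1 \<in> ?D \<and> i - 1 < M}"
    then have "i - 1 \<in> ?D \<inter> {..<M}" "i = Suc (i - 1)" by auto
    then show "i \<in> Suc ` (?D \<inter> {..<M})" by (metis imageI)
  next
    fix i assume "i \<in> Suc ` (?D \<inter> {..<M})"
    then obtain p where p: "p \<in> ?D" "p < M" "i = Suc p" by blast
    then have "p < m" using sp by auto
    then show "i \<in> {i\<in>{1..m}. i - 1 \<in> ?D \<and> i - 1 < M}" using p by auto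
  qed
  have s2: "{i\<in>{1..m}. M + (i - 1) \<in> ?D} = (\<lambda>p. Suc (p - M)) ` (?D \<inter> {M..})"
  proof (intro equalityI subsetI)
    fix i assume "i \<in> {i\<in>{1..m}. M + (i - 1) \<in> ?D}"
    then have "M + (i - 1) \<in> ?D \<inter> {M..}" "i = Suc (M + (i - 1) - M)" by auto
    then show "i \<in> (\<lambda>p. Suc (p - M)) ` (?D \<inter> {M..})" by (metis imageI)
  next
    fix i assume "i \<in> (\<lambda>p. Suc (p - M)) ` (?D \<inter> {M..})"
    then obtain p where p: "p \<in> ?D" "M \<le> p" "i = Suc (p - M)" by blast
    then have "p < m" using sp by auto
    then show "i \<in> {i\<in>{1..m}. M + (i - 1) \<in> ?D}" using p by auto
  qed
  have i1: "inj_on Suc (?D \<inter> {..<M})" by simp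
  have i2: "inj_on (\<lambda>p. Suc (p - M)) (?D \<inter> {M..})" by (auto simp: inj_on_def)
  have "card (?D \<inter> {..<M}) + card (?D \<inter> {M..}) = card ((?D \<inter> {..<M}) \<union> (?D \<inter> {M..}))"
    by (rule card_Un_disjoint[symmetric]) auto
  also have "(?D \<inter> {..<M}) \<union> (?D \<inter> {M..}) = ?D" by auto
  finally show ?thesis using s1 s2 card_image[OF i1] card_image[OF i2] by simp
qed

lemma prob_holds:
  assumes n2: "n \<ge> 2" and Mm: "M \<le> m" and dp: "distinct pos" and sp: "set pos \<subseteq> {..<m}"
  shows "measure_pmf.prob (sample n m) {\<omega>. holds (cpos h M \<omega>) pos Cs}
           \<le> (1 / real (card (clauses n))) ^ length pos"
proof -
  define N where "N = real (card (clauses n))"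
  define P where "P = clause_pmf n"
  define T where "T = pair_pmf P (pair_pmf P P)"
  define Y1 where "Y1 i = {C. \<forall>q<length pos. pos!q = i - 1 \<and> i - 1 < M \<longrightarrow> C = Cs!q}" for i
  define Y2 where "Y2 i = {C. \<forall>q<length pos. pos!q = M + (i - 1) \<longrightarrow> C = Cs!q}" for i
  define B where "B i = Y1 i \<times> (if h = 1 then Y2 i \<times> UNIV else UNIV \<times> Y2 i)" for i
  define f1 where "f1 i = (if i - 1 \<in> set pos \<and> i - 1 < M then 1/N else 1)" for i
  define f2 where "f2 i = (if M + (i - 1) \<in> set pos then 1/N else 1)" for i
  have sub: "{\<omega>. holds (cpos h M \<omega>) pos Cs} \<subseteq> Pi {1..m} B"
  proof (intro subsetI Pi_I)
    fix \<omega> i assume "\<omega> \<in> {\<omega>. holds (cpos h M \<omega>) pos Cs}" and i: "i \<in> {1..m}"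
    then have H: "\<And>q. q < length pos \<Longrightarrow> cpos h M \<omega> (pos!q) = Cs!q" by (simp add: holds_def)
    obtain x y z where xyz: "\<omega> i = (x, y, z)" by (metis prod.collapse)
    have si: "Suc (i - 1) = i" using i by auto
    have "x \<in> Y1 i"
      unfolding Y1_def
    proof (intro CollectI allI impI)
      fix q assume q: "q < length pos" "pos!q = i - 1 \<and> i - 1 < M"
      then have "cpos h M \<omega> (pos!q) = fst (\<omega> i)" using si by (simp add: cpos_def)
      then show "x = Cs!q" using H[OF q(1)] xyz by simp
    qed
    moreover have "(if h = 1 then y else z) \<in> Y2 i"
      unfolding Y2_def
    proof (intro CollectI allI impI)
      fix q assume q: "q < length pos" "pos!q = M + (i - 1)"
      moreover have "\<not> M + (i - 1) < M" by simp
      ultimately have "cpos h M \<omega> (pos!q) = (if h = 1 then fst (snd (\<omega> i)) else snd (snd (\<omega> i)))"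
        using si unfolding cpos_def by simp
      then show "(if h = 1 then y else z) = Cs!q" using H[OF q(1)] xyz by simp
    qed
    ultimately show "\<omega> i \<in> B i" using xyz by (auto simp: B_def)
  qed
  have "measure_pmf.prob (sample n m) {\<omega>. holds (cpos h M \<omega>) pos Cs}
        \<le> measure_pmf.prob (sample n m) (Pi {1..m} B)"
    by (rule measure_pmf.finite_measure_mono[OF sub]) simp
  also have "\<dots> = (\<Prod>i\<in>{1..m}. measure_pmf.prob T (B i))"
    unfolding sample_def T_def P_def by (rule measure_Pi_pmf_Pi) simp
  also have "\<dots> \<le> (\<Prod>i\<in>{1..m}. f1 i * f2 i)"
  proof (rule prod_mono, rule conjI)
    fix i assume i: "i \<in> {1..m}"
    show "0 \<le> measure_pmf.prob T (B i)" by simp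
    have mB: "measure_pmf.prob T (B i) = measure_pmf.prob P (Y1 i) * measure_pmf.prob P (Y2 i)"
      unfolding T_def B_def by (simp add: pair_prod_measure)
    have b1: "measure_pmf.prob P (Y1 i) \<le> f1 i"
    proof (cases "i - 1 \<in> set pos \<and> i - 1 < M")
      case True
      then obtain q where q: "q < length pos" "pos!q = i - 1" by (auto simp: in_set_conv_nth)
      have "Y1 i \<subseteq> {Cs!q}" using q True by (auto simp: Y1_def)
      then show ?thesis using clause_pmf_le'[OF n2] True by (simp add: f1_def P_def N_def)
    next
      case False then show ?thesis unfolding f1_def by (subst if_not_P[OF False]) (rule measure_pmf.prob_le_1)
    qed
    have b2: "measure_pmf.prob P (Y2 i) \<le> f2 i"
    proof (cases "M + (i - 1) \<in> set pos")
      case True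
      then obtain q where q: "q < length pos" "pos!q = M + (i - 1)" by (auto simp: in_set_conv_nth)
      have "Y2 i \<subseteq> {Cs!q}" using q by (auto simp: Y2_def)
      then show ?thesis using clause_pmf_le'[OF n2] True by (simp add: f2_def P_def N_def)
    next
      case False then show ?thesis unfolding f2_def by (subst if_not_P[OF False]) (rule measure_pmf.prob_le_1)
    qed
    show "measure_pmf.prob T (B i) \<le> f1 i * f2 i"
      unfolding mB by (rule mult_mono[OF b1 b2]) (auto simp: f1_def N_def)
  qed
  also have "(\<Prod>i\<in>{1..m}. f1 i * f2 i) = (\<Prod>i\<in>{1..m}. f1 i) * (\<Prod>i\<in>{1..m}. f2 i)"
    by (rule prod.distrib)
  also have "\<dots> = (1/N) ^ card {i\<in>{1..m}. i - 1 \<in> set pos \<and> i - 1 < M} *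
                   (1/N) ^ card {i\<in>{1..m}. M + (i - 1) \<in> set pos}"
    unfolding f1_def f2_def by (simp only: prod_if_const[OF finite_atLeastAtMost])
  also have "\<dots> = (1/N) ^ length pos"
    using card_split_M[OF sp Mm] distinct_card[OF dp] by (simp add: power_add[symmetric])
  finally show ?thesis by (simp add: N_def)
qed

definition PS :: "nat \<Rightarrow> nat \<Rightarrow> nat \<Rightarrow> nat list set" where
  "PS m M s = {pos. length pos = s \<and> distinct pos \<and> set pos \<subseteq> {..<m} \<and> M - 1 \<in> set pos}"

definition TS :: "nat \<Rightarrow> nat \<Rightarrow> lit list set" where
  "TS n k = {ts. set ts \<subseteq> lits n \<and> length ts = k}"

definition DS :: "nat \<Rightarrow> nat \<Rightarrow> nat \<Rightarrow> nat \<Rightarrow> nat \<Rightarrow> (nat list \<times> clause list) set" where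
  "DS m M n k r = (\<lambda>(pos, ts, j, i, b, ss). (pos, desc ts j i b ss)) `
      (PS m M (k + r) \<times> TS n k \<times> {..<k} \<times> {..<k} \<times> (UNIV :: bool set) \<times> TS n r)"

lemma TS_fin: "finite (TS n k)" unfolding TS_def by (rule finite_lists_length_eq) simp
lemma TS_card: "card (TS n k) = (2 * n) ^ k" unfolding TS_def by (simp add: card_lists_length_eq card_lits)

lemma PS_sub:
  assumes "s \<ge> 1"
  shows "PS m M s \<subseteq> (\<lambda>(j, xs). take j xs @ [M - 1] @ drop j xs) ` ({..<s} \<times> {xs. set xs \<subseteq> {..<m} \<and> length xs = s - 1})"
proof
  fix pos assume "pos \<in> PS m M s"
  then have p: "length pos = s" "set pos \<subseteq> {..<m}" "M - 1 \<in> set pos" by (auto simp: PS_def)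
  then obtain j where j: "j < s" "pos ! j = M - 1" by (auto simp: in_set_conv_nth)
  define xs where "xs = take j pos @ drop (Suc j) pos"
  have "length xs = s - 1" using j p by (simp add: xs_def)
  moreover have "set xs \<subseteq> {..<m}" using p(2) set_take_subset[of j pos] set_drop_subset[of "Suc j" pos]
    unfolding xs_def by auto
  moreover have "take j xs @ [M - 1] @ drop j xs = pos"
  proof -
    have "take j xs = take j pos" using j p by (simp add: xs_def)
    moreover have "drop j xs = drop (Suc j) pos" using j p by (simp add: xs_def)
    moreover have "take j pos @ pos ! j # drop (Suc j) pos = pos" by (rule id_take_nth_drop[symmetric]) (use j p in simp)
    ultimately show ?thesis using j by simp
  qed
  ultimately show "pos \<in> (\<lambda>(j, xs). take j xs @ [M - 1] @ drop j xs) ` ({..<s} \<times> {xs. set xs \<subseteq> {..<m} \<and> length xs = s - 1})"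
    using j by (intro image_eqI[of _ _ "(j, xs)"]) auto
qed

lemma PS_fin_card:
  assumes "s \<ge> 1"
  shows "finite (PS m M s)" "card (PS m M s) \<le> s * m ^ (s - 1)"
proof -
  let ?A = "{..<s} \<times> {xs. set xs \<subseteq> {..<m} \<and> length xs = s - 1}"
  let ?f = "\<lambda>(j, xs). take j xs @ [M - 1] @ drop j xs"
  have fA: "finite ?A" by (simp add: finite_lists_length_eq)
  show "finite (PS m M s)" by (rule finite_subset[OF PS_sub[OF assms]]) (rule finite_imageI[OF fA])
  have "card (PS m M s) \<le> card (?f ` ?A)"
    using PS_sub[OF assms] fA by (intro card_mono) auto
  also have "\<dots> \<le> card ?A" by (rule card_image_le[OF fA])
  also have "\<dots> = s * m ^ (s - 1)" by (simp add: card_cartesian_product card_lists_length_eq)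
  finally show "card (PS m M s) \<le> s * m ^ (s - 1)" .
qed

lemma DS_fin_card:
  assumes "k + r \<ge> 1"
  shows "finite (DS m M n k r)"
    "card (DS m M n k r) \<le> ((k + r) * m ^ (k + r - 1)) * ((2 * n) ^ k * (k * (k * (2 * (2 * n) ^ r))))"
proof -
  let ?A = "PS m M (k + r) \<times> TS n k \<times> {..<k} \<times> {..<k} \<times> (UNIV :: bool set) \<times> TS n r"
  have fA: "finite ?A" using PS_fin_card(1)[OF assms] TS_fin by simp
  show "finite (DS m M n k r)" unfolding DS_def using fA by simp
  have "card (DS m M n k r) \<le> card ?A" unfolding DS_def by (rule card_image_le[OF fA])
  also have "\<dots> = card (PS m M (k + r)) * ((2 * n) ^ k * (k * (k * (2 * (2 * n) ^ r))))"
    by (simp add: card_cartesian_product TS_card)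
  also have "\<dots> \<le> ((k + r) * m ^ (k + r - 1)) * ((2 * n) ^ k * (k * (k * (2 * (2 * n) ^ r))))"
    by (intro mult_right_mono PS_fin_card(2)[OF assms]) simp
  finally show "card (DS m M n k r) \<le> ((k + r) * m ^ (k + r - 1)) * ((2 * n) ^ k * (k * (k * (2 * (2 * n) ^ r))))" .
qed

lemma DS_elem:
  assumes "d \<in> DS m M n k r"
  shows "distinct (fst d) \<and> set (fst d) \<subseteq> {..<m} \<and> length (fst d) = k + r"
  using assms by (auto simp: DS_def PS_def)

lemma fail_bound:
  assumes n2: "n \<ge> 2" and M: "1 \<le> M" "M \<le> m"
  shows "measure_pmf.prob (sample n m) {\<omega>. prune (Phi h \<omega> M (m - M)) \<noteq> prune (Phi h \<omega> (M - 1) (m - M)) + {#fst (\<omega> M)#}}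
   \<le> (\<Sum>s\<in>{1..m}. \<Sum>k\<in>{1..s}. real (card (DS m M n k (s - k))) * (1 / real (card (clauses n))) ^ s)"
proof -
  define F where "F = {\<omega>. prune (Phi h \<omega> M (m - M)) \<noteq> prune (Phi h \<omega> (M - 1) (m - M)) + {#fst (\<omega> M)#}}"
  define Ev where "Ev d = {\<omega>. holds (cpos h M \<omega>) (fst d) (snd d)}" for d
  define N where "N = real (card (clauses n))"
  have cover: "F \<inter> set_pmf (sample n m) \<subseteq> (\<Union>s\<in>{1..m}. \<Union>k\<in>{1..s}. \<Union>d\<in>DS m M n k (s - k). Ev d)"
  proof
    fix \<omega> assume om: "\<omega> \<in> F \<inter> set_pmf (sample n m)"
    have V: "\<forall>p<m. cpos h M \<omega> p \<in> clauses n" using support_valid[OF n2 M(2)] om by blast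
    have P': "Phi h \<omega> M (m - M) = mset (map (cpos h M \<omega>) [0..<m])" by (rule Phi_cpos[OF M(2)])
    have P: "Phi h \<omega> M (m - M) = Phi h \<omega> (M - 1) (m - M) + {#cpos h M \<omega> (M - 1)#}"
      using Phi_split[OF M(1)] cpos_last[OF M(1)] by simp
    have FF: "prune (Phi h \<omega> M (m - M)) \<noteq> prune (Phi h \<omega> (M - 1) (m - M)) + {#cpos h M \<omega> (M - 1)#}"
      using om cpos_last[OF M(1)] by (simp add: F_def)
    obtain pos ts j i b ss where W: "distinct pos" "set pos \<subseteq> {..<m}" "(M-1) \<in> set pos"
      "length ts \<ge> 1" "set ts \<subseteq> lits n" "j < length ts" "i < length ts" "set ss \<subseteq> lits n"
      "length ts + length ss = length pos" "holds (cpos h M \<omega>) pos (desc ts j i b ss)"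
      using fail_witness[OF M V P' P FF] by blast
    define s where "s = length pos"
    define k where "k = length ts"
    have "card (set pos) \<le> card {..<m}" using W(2) by (intro card_mono) auto
    then have sm: "s \<le> m" using distinct_card[OF W(1)] by (simp add: s_def)
    have ks: "1 \<le> k" "k \<le> s" using W(4,9) by (auto simp: s_def k_def)
    have "(pos, desc ts j i b ss) \<in> DS m M n k (s - k)"
      unfolding DS_def
    proof (rule image_eqI[of _ _ "(pos, ts, j, i, b, ss)"])
      show "(pos, desc ts j i b ss) = (case (pos, ts, j, i, b, ss) of (pos, ts, j, i, b, ss) \<Rightarrow> (pos, desc ts j i b ss))"
        by simp
      have "k + (s - k) = s" using ks by simp
      then show "(pos, ts, j, i, b, ss) \<in> PS m M (k + (s - k)) \<times> TS n k \<times> {..<k} \<times> {..<k} \<times> UNIV \<times> TS n (s - k)"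
        using W by (auto simp: PS_def TS_def s_def k_def)
    qed
    moreover have "\<omega> \<in> Ev (pos, desc ts j i b ss)" using W(10) by (simp add: Ev_def)
    moreover have "s \<in> {1..m}" "k \<in> {1..s}" using sm ks by auto
    ultimately show "\<omega> \<in> (\<Union>s\<in>{1..m}. \<Union>k\<in>{1..s}. \<Union>d\<in>DS m M n k (s - k). Ev d)"
      by blast
  qed
  have "measure_pmf.prob (sample n m) F = measure_pmf.prob (sample n m) (F \<inter> set_pmf (sample n m))"
    by (rule measure_Int_set_pmf[symmetric])
  also have "\<dots> \<le> measure_pmf.prob (sample n m) (\<Union>s\<in>{1..m}. \<Union>k\<in>{1..s}. \<Union>d\<in>DS m M n k (s - k). Ev d)"
    by (rule measure_pmf.finite_measure_mono[OF cover]) simp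
  also have "\<dots> \<le> (\<Sum>s\<in>{1..m}. measure_pmf.prob (sample n m) (\<Union>k\<in>{1..s}. \<Union>d\<in>DS m M n k (s - k). Ev d))"
    by (rule measure_pmf.finite_measure_subadditive_finite) auto
  also have "\<dots> \<le> (\<Sum>s\<in>{1..m}. \<Sum>k\<in>{1..s}. real (card (DS m M n k (s - k))) * (1 / N) ^ s)"
  proof (rule sum_mono)
    fix s assume s: "s \<in> {1..m}"
    have "measure_pmf.prob (sample n m) (\<Union>k\<in>{1..s}. \<Union>d\<in>DS m M n k (s - k). Ev d)
       \<le> (\<Sum>k\<in>{1..s}. measure_pmf.prob (sample n m) (\<Union>d\<in>DS m M n k (s - k). Ev d))"
      by (rule measure_pmf.finite_measure_subadditive_finite) auto
    also have "\<dots> \<le> (\<Sum>k\<in>{1..s}. real (card (DS m M n k (s - k))) * (1 / N) ^ s)"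
    proof (rule sum_mono)
      fix k assume k: "k \<in> {1..s}"
      have fD: "finite (DS m M n k (s - k))" using DS_fin_card(1)[of k "s - k"] k by simp
      have "measure_pmf.prob (sample n m) (\<Union>d\<in>DS m M n k (s - k). Ev d)
          \<le> (\<Sum>d\<in>DS m M n k (s - k). measure_pmf.prob (sample n m) (Ev d))"
        by (rule measure_pmf.finite_measure_subadditive_finite[OF fD]) auto
      also have "\<dots> \<le> (\<Sum>d\<in>DS m M n k (s - k). (1 / N) ^ s)"
      proof (rule sum_mono)
        fix d assume d: "d \<in> DS m M n k (s - k)"
        have "k + (s - k) = s" using k by simp
        then have dd: "distinct (fst d)" "set (fst d) \<subseteq> {..<m}" "length (fst d) = s"
          using DS_elem[OF d] by auto
        show "measure_pmf.prob (sample n m) (Ev d) \<le> (1 / N) ^ s"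
          unfolding Ev_def N_def using prob_holds[OF n2 M(2) dd(1,2), of h "snd d"] dd(3) by simp
      qed
      also have "\<dots> = real (card (DS m M n k (s - k))) * (1 / N) ^ s" by simp
      finally show "measure_pmf.prob (sample n m) (\<Union>d\<in>DS m M n k (s - k). Ev d) \<le> real (card (DS m M n k (s - k))) * (1 / N) ^ s" .
    qed
    finally show "measure_pmf.prob (sample n m) (\<Union>k\<in>{1..s}. \<Union>d\<in>DS m M n k (s - k). Ev d)
       \<le> (\<Sum>k\<in>{1..s}. real (card (DS m M n k (s - k))) * (1 / N) ^ s)" .
  qed
  finally show ?thesis by (simp add: F_def N_def)
qed

lemma term_bound:
  assumes n2: "n \<ge> 2" and m1: "m \<ge> 1" and k: "1 \<le> k" "k \<le> s"
  shows "real (card (DS m M n k (s - k))) * (1 / real (card (clauses n))) ^ s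
         \<le> 2 * real s ^ 3 * (real m / (real n - 1)) ^ s / real m"
proof -
  define N where "N = real (card (clauses n))"
  have ks: "k + (s - k) = s" "k + (s - k) - 1 = s - 1" using k by auto
  have Nb: "2 * real n * (real n - 1) \<le> N"
  proof -
    have "real (2 * n * (n - 1)) \<le> N" unfolding N_def using card_clauses by (rule of_nat_mono)
    then show ?thesis using n2 by (simp add: of_nat_diff)
  qed
  have pos: "0 < 2 * real n * (real n - 1)" using n2 by auto
  have c0: "card (DS m M n k (s - k)) \<le> (s * m ^ (s - 1)) * ((2 * n) ^ k * (k * (k * (2 * (2 * n) ^ (s - k)))))"
    using DS_fin_card(2)[of k "s - k" m M n] k ks by simp
  have "real (card (DS m M n k (s - k))) \<le> real ((s * m ^ (s - 1)) * ((2 * n) ^ k * (k * (k * (2 * (2 * n) ^ (s - k))))))"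
    using c0 by (rule of_nat_mono)
  also have "\<dots> = 2 * real s * real m ^ (s - 1) * ((2 * real n) ^ k * (2 * real n) ^ (s - k)) * (real k * real k)"
    by (simp add: algebra_simps)
  also have "(2 * real n) ^ k * (2 * real n) ^ (s - k) = (2 * real n) ^ s"
    by (subst power_add[symmetric]) (simp add: ks)
  also have "2 * real s * real m ^ (s - 1) * (2 * real n) ^ s * (real k * real k)
      \<le> 2 * real s * real m ^ (s - 1) * (2 * real n) ^ s * (real s * real s)"
    using k by (intro mult_left_mono mult_mono) auto
  finally have c1: "real (card (DS m M n k (s - k))) \<le> 2 * real s ^ 3 * real m ^ (s - 1) * (2 * real n) ^ s"
    by (simp add: power3_eq_cube algebra_simps)
  have p1: "(1 / N) ^ s \<le> (1 / (2 * real n * (real n - 1))) ^ s"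
    using Nb pos by (intro power_mono divide_left_mono) auto
  have "real (card (DS m M n k (s - k))) * (1 / N) ^ s
        \<le> (2 * real s ^ 3 * real m ^ (s - 1) * (2 * real n) ^ s) * (1 / (2 * real n * (real n - 1))) ^ s"
  proof (rule mult_mono[OF c1 p1])
    show "0 \<le> (1 / N) ^ s" using Nb pos by simp
  qed simp
  also have "\<dots> = 2 * real s ^ 3 * real m ^ (s - 1) * ((2 * real n) * (1 / (2 * real n * (real n - 1)))) ^ s"
    by (simp only: power_mult_distrib mult.assoc)
  also have "(2 * real n) * (1 / (2 * real n * (real n - 1))) = 1 / (real n - 1)"
    using n2 by (simp add: field_simps)
  also have "real m ^ (s - 1) = real m ^ s / real m"
    using m1 k by (simp add: power_diff)
  also have "2 * real s ^ 3 * (real m ^ s / real m) * (1 / (real n - 1)) ^ s = 2 * real s ^ 3 * (real m / (real n - 1)) ^ s / real m"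
    by (simp add: power_divide)
  finally show ?thesis by (simp add: N_def)
qed

lemma total_bound:
  assumes n2: "n \<ge> 2" and M: "1 \<le> M" "M \<le> m" and q0: "0 \<le> q0" "real m / (real n - 1) \<le> q0"
    and sm: "summable (\<lambda>s. real s ^ 4 * q0 ^ s)"
  shows "measure_pmf.prob (sample n m) {\<omega>. prune (Phi h \<omega> M (m - M)) \<noteq> prune (Phi h \<omega> (M - 1) (m - M)) + {#fst (\<omega> M)#}}
   \<le> 2 / real m * (\<Sum>s. real s ^ 4 * q0 ^ s)"
proof -
  have m1: "m \<ge> 1" using M by simp
  have q: "0 \<le> real m / (real n - 1)" using n2 by simp
  have "(\<Sum>s\<in>{1..m}. \<Sum>k\<in>{1..s}. real (card (DS m M n k (s - k))) * (1 / real (card (clauses n))) ^ s)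
      \<le> (\<Sum>s\<in>{1..m}. \<Sum>k\<in>{1..s}. 2 * real s ^ 3 * q0 ^ s / real m)"
  proof (intro sum_mono)
    fix s k assume s: "s \<in> {1..m}" and k: "k \<in> {1..s}"
    have "real (card (DS m M n k (s - k))) * (1 / real (card (clauses n))) ^ s
         \<le> 2 * real s ^ 3 * (real m / (real n - 1)) ^ s / real m"
      using term_bound[OF n2 m1, of k s M] k by auto
    also have "\<dots> \<le> 2 * real s ^ 3 * q0 ^ s / real m"
      using q q0 m1 by (intro divide_right_mono mult_left_mono power_mono) auto
    finally show "real (card (DS m M n k (s - k))) * (1 / real (card (clauses n))) ^ s \<le> 2 * real s ^ 3 * q0 ^ s / real m" .
  qed
  also have "\<dots> = (\<Sum>s\<in>{1..m}. 2 / real m * (real s ^ 4 * q0 ^ s))"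
    by (intro sum.cong) (auto simp: power_def)
  also have "\<dots> = 2 / real m * (\<Sum>s\<in>{1..m}. real s ^ 4 * q0 ^ s)"
    by (simp add: sum_distrib_left)
  also have "\<dots> \<le> 2 / real m * (\<Sum>s. real s ^ 4 * q0 ^ s)"
    using q0 by (intro mult_left_mono sum_le_suminf[OF sm]) auto
  finally show ?thesis using fail_bound[OF n2 M, of h] by linarith
qed



lemma summable_poly_geom:
  assumes "0 \<le> q" "q < (1::real)"
  shows "summable (\<lambda>s. real s ^ 4 * q ^ s)"
proof (cases "q = 0")
  case True
  then show ?thesis by (intro summable_finite[of "{0}"]) auto
next
  case False
  define r where "r = sqrt q"
  have r: "0 < r" "r < 1" using assms False by (auto simp: r_def real_sqrt_lt_1_iff)
  have q: "q = r * r" using assms by (simp add: r_def)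
  have lim: "(\<lambda>s. real s ^ 4 * r ^ s) \<longlonglongrightarrow> 0" using r by real_asymp
  then have ev: "eventually (\<lambda>s. real s ^ 4 * r ^ s \<le> 1) sequentially"
    using order_tendstoD(2)[OF lim, of 1] by (auto elim: eventually_mono)
  have "eventually (\<lambda>s. norm (real s ^ 4 * q ^ s) \<le> r ^ s) sequentially"
    using ev
  proof eventually_elim
    case (elim s)
    have "norm (real s ^ 4 * q ^ s) = (real s ^ 4 * r ^ s) * r ^ s"
      using r by (simp add: q power_mult_distrib abs_mult)
    also have "\<dots> \<le> 1 * r ^ s" using elim r by (intro mult_right_mono) auto
    finally show ?case by simp
  qed
  moreover have "summable (\<lambda>s. r ^ s)" using r by (simp add: summable_geometric)
  ultimately show ?thesis by (rule summable_comparison_test_ev)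
qed

lemma asymp_facts:
  fixes m :: "nat \<Rightarrow> nat" and d :: real
  assumes "0 < d" "(\<lambda>n. real (m n)) \<sim>[sequentially] (\<lambda>n. d * real n / 2)"
  shows "(\<lambda>n. real (m n) / (real n - 1)) \<longlonglongrightarrow> d / 2"
    "filterlim (\<lambda>n. real (m n)) at_top sequentially"
proof -
  have "(\<lambda>n. real (m n) / (real n - 1)) \<sim>[sequentially] (\<lambda>n. (d * real n / 2) / (real n - 1))"
    using assms(2) by (intro asymp_equiv_intros) auto
  moreover have "(\<lambda>n. (d * real n / 2) / (real n - 1)) \<longlonglongrightarrow> d / 2" by real_asymp
  ultimately show "(\<lambda>n. real (m n) / (real n - 1)) \<longlonglongrightarrow> d / 2"
    using asymp_equiv_tendsto_transfer asymp_equiv_sym by blast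
  have "filterlim (\<lambda>n. d * real n / 2) at_top sequentially" using assms(1) by real_asymp
  then show "filterlim (\<lambda>n. real (m n)) at_top sequentially"
    using asymp_equiv_at_top_transfer asymp_equiv_sym assms(2) by blast
qed


theorem lemma7p1:
  fixes d :: real and h :: nat and m M :: "nat \<Rightarrow> nat"
  assumes "0 < d" and "d < 2" and "h \<in> {1, 2}"
    and "(\<lambda>n. real (m n)) \<sim>[sequentially] (\<lambda>n. d * real n / 2)"
    and "eventually (\<lambda>n. 1 \<le> M n \<and> M n \<le> m n) sequentially"
  shows "(\<lambda>n. measure_pmf.prob (sample n (m n))
            {\<omega>. prune (Phi h \<omega> (M n) (m n - M n)) =
                 prune (Phi h \<omega> (M n - 1) (m n - M n)) + {# fst (\<omega> (M n)) #}})
         \<longlonglongrightarrow> 1"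
proof -
  note AF = asymp_facts[OF assms(1) assms(4)]
  define q0 where "q0 = (2 + d) / 4"
  have q0: "0 \<le> q0" "q0 < 1" "d / 2 < q0" using assms(1,2) by (auto simp: q0_def)
  define S where "S = (\<Sum>s. real s ^ 4 * q0 ^ s)"
  have sm: "summable (\<lambda>s. real s ^ 4 * q0 ^ s)" using summable_poly_geom q0 by blast
  define F where "F n = {\<omega>. prune (Phi h \<omega> (M n) (m n - M n)) \<noteq>
                 prune (Phi h \<omega> (M n - 1) (m n - M n)) + {# fst (\<omega> (M n)) #}}" for n
  define G where "G n = {\<omega>. prune (Phi h \<omega> (M n) (m n - M n)) =
                 prune (Phi h \<omega> (M n - 1) (m n - M n)) + {# fst (\<omega> (M n)) #}}" for n
  have GF: "measure_pmf.prob (sample n (m n)) (G n) = 1 - measure_pmf.prob (sample n (m n)) (F n)" for n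
  proof -
    have "G n = UNIV - F n" by (auto simp: G_def F_def)
    then show ?thesis using measure_pmf.prob_compl[of "F n" "sample n (m n)"] by simp
  qed
  have ev1: "eventually (\<lambda>n. real (m n) / (real n - 1) < q0) sequentially"
    using order_tendstoD(2)[OF AF(1) q0(3)] .
  have ev2: "eventually (\<lambda>n. n \<ge> 2) sequentially" by (rule eventually_ge_at_top)
  have low: "eventually (\<lambda>n. 1 - 2 / real (m n) * S \<le> measure_pmf.prob (sample n (m n)) (G n)) sequentially"
    using ev1 ev2 assms(5)
  proof eventually_elim
    case (elim n)
    have "measure_pmf.prob (sample n (m n)) (F n) \<le> 2 / real (m n) * S"
      unfolding F_def S_def using total_bound[OF elim(2) _ _ q0(1) _ sm, of "M n" "m n" h] elim by auto
    then show ?case using GF[of n] by simp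
  qed
  have up: "eventually (\<lambda>n. measure_pmf.prob (sample n (m n)) (G n) \<le> 1) sequentially"
    by (simp add: measure_pmf.prob_le_1)
  have "(\<lambda>n. 2 * S / real (m n)) \<longlonglongrightarrow> 0"
    by (rule tendsto_divide_0[OF tendsto_const filterlim_at_top_imp_at_infinity[OF AF(2)]])
  then have "(\<lambda>n. 1 - 2 / real (m n) * S) \<longlonglongrightarrow> 1 - 0"
    by (intro tendsto_diff tendsto_const) (simp add: mult.commute)
  then have "(\<lambda>n. 1 - 2 / real (m n) * S) \<longlonglongrightarrow> 1" by simp
  then have "(\<lambda>n. measure_pmf.prob (sample n (m n)) (G n)) \<longlonglongrightarrow> 1"
    by (rule tendsto_sandwich[OF low up]) simp
  then show ?thesis by (simp add: G_def)
qed

end
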